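(* Let $Q>1$, let $\gamma<1$ be the root of $t-\log t=1+\log Q$ with $\gamma<1$, and let $\Omega_Q=\{(x,y): x>0,\ 1\le xe^{-y}\le Q\}$. For $(x,y)\in\Omega_Q$ let $v=v(x,y)\le x$ be the root of $y=\frac{\gamma x}{v}+\log v-\gamma$, and set $B(x,y)=x\log v+\frac{x-v}{\gamma}$. Consider on $I=[0,1]$ the function $$w(t)=\begin{cases}v\left(\frac ta\right)^{\gamma-1},& t\in[0,a],\\ v,& t\in[a,1],\end{cases}$$ where $a$ is chosen so that $(\langle w\rangle_I,\langle\log w\rangle_I)=(x,y)$. Then $[w]_{A_\infty,[0,1]}\le Q$ and $B(x,y)=\langle w\log w\rangle_I$.
   Context: $\langle f\rangle_J=\frac1{|J|}\int_J f$. For a weight $w$ on $[0,1]$, $[w]_{A_\infty,[0,1]}=\sup_{J\subset[0,1]}\langle w\rangle_Je^{-\langle\log w\rangle_J}$, supremum over subintervals $J$. *)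

theory Defs
  imports "HOL-Analysis.Analysis"
begin

definition avg :: "real \<Rightarrow> real \<Rightarrow> (real \<Rightarrow> real) \<Rightarrow> real" where
  "avg c d f = (LBINT t:{c..d}. f t) / (d - c)"

definition Ainf01 :: "(real \<Rightarrow> real) \<Rightarrow> ereal" where
  "Ainf01 w = (SUP J \<in> {(c, d). 0 \<le> c \<and> c < d \<and> d \<le> 1}.
      ereal (avg (fst J) (snd J) w * exp (- avg (fst J) (snd J) (\<lambda>t. ln (w t)))))"

end

theory Submission
  imports Defs
begin

lemma LBINT_eq_integral:
  fixes f :: "real \<Rightarrow> real"
  assumes "f absolutely_integrable_on {c..d}" "f \<in> borel_measurable borel"
  shows "(LBINT t:{c..d}. f t) = integral {c..d} f"
proof -
  have "set_integrable lborel {c..d} f"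
    using assms(1) unfolding set_integrable_def
    by (subst (asm) integrable_completion) (use assms(2) in auto)
  then show ?thesis by (rule set_borel_integral_eq_integral)
qed

lemma const_integral:
  fixes f :: "real \<Rightarrow> real"
  assumes "c \<le> d" "\<And>t. c < t \<Longrightarrow> t < d \<Longrightarrow> f t = k"
  shows "(f has_integral (k * (d - c))) {c..d}"
proof -
  have "(f has_integral (k * d - k * c)) {c..d}"
  proof (rule fundamental_theorem_of_calculus_interior)
    show "continuous_on {c..d} (\<lambda>t. k * t)" by (intro continuous_intros)
    fix t assume t: "t \<in> {c<..<d}"
    have "((\<lambda>t. k * t) has_real_derivative k * 1) (at t)" by (auto intro!: derivative_eq_intros)
    then show "((\<lambda>t. k * t) has_vector_derivative f t) (at t)"
      using assms(2)[of t] t by (simp add: has_real_derivative_iff_has_vector_derivative)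
  qed (use assms in auto)
  then show ?thesis by (simp add: algebra_simps)
qed

lemma integral_sub:
  fixes f :: "real \<Rightarrow> real"
  assumes "0 \<le> c" "c \<le> d" "(f has_integral A) {0..c}" "(f has_integral B) {0..d}" "f integrable_on {c..d}"
  shows "integral {c..d} f = B - A"
proof -
  have "(f has_integral (A + integral {c..d} f)) {0..d}"
    using has_integral_combine[OF assms(1,2) assms(3) integrable_integral[OF assms(5)]] .
  then have "A + integral {c..d} f = B" using assms(4) by (rule has_integral_unique)
  then show ?thesis by simp
qed

lemma conv_step:
  fixes c d Ac Ad Kc Kd Q :: real
  assumes cd: "0 < c" "c < d" and Q: "Q > 0"
    and Ac: "Ac = Q * c * exp (Kc / c)" and Ad: "Ad \<le> Q * d * exp (Kd / d)"
  shows "(Ad - Ac) / (d - c) * exp (- ((Kd - Kc) / (d - c))) \<le> Q"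
proof -
  define M where "M = Kd / d"
  define m0 where "m0 = Kc / c"
  define m1 where "m1 = (Kd - Kc) / (d - c)"
  have e0: "exp m0 \<ge> exp M * (1 + (m0 - M))"
    using exp_ge_add_one_self[of "m0 - M"] by (simp add: exp_diff field_simps)
  have e1: "exp m1 \<ge> exp M * (1 + (m1 - M))"
    using exp_ge_add_one_self[of "m1 - M"] by (simp add: exp_diff field_simps)
  have sum0: "c * (m0 - M) + (d - c) * (m1 - M) = 0"
    using cd unfolding M_def m0_def m1_def by (simp add: field_simps)
  have "c * exp m0 + (d - c) * exp m1 \<ge> c * (exp M * (1 + (m0 - M))) + (d - c) * (exp M * (1 + (m1 - M)))"
    using e0 e1 cd by (intro add_mono mult_left_mono) auto
  also have "c * (exp M * (1 + (m0 - M))) + (d - c) * (exp M * (1 + (m1 - M))) = exp M * (d + (c * (m0 - M) + (d - c) * (m1 - M)))"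
    by (simp add: algebra_simps)
  finally have key: "d * exp M \<le> c * exp m0 + (d - c) * exp m1" using sum0 by (simp add: mult.commute)
  have "Ad - Ac \<le> Q * (d * exp M - c * exp m0)"
    using Ad Ac unfolding M_def m0_def by (simp add: algebra_simps)
  also have "\<dots> \<le> Q * ((d - c) * exp m1)" using key Q by (intro mult_left_mono) auto
  finally have "Ad - Ac \<le> Q * (d - c) * exp m1" by simp
  then have "(Ad - Ac) / (d - c) \<le> Q * exp m1" using cd by (simp add: divide_le_eq mult_ac)
  then have "(Ad - Ac) / (d - c) * exp (- m1) \<le> Q * exp m1 * exp (- m1)"
    by (intro mult_right_mono) auto
  moreover have "Q * exp m1 * exp (- m1) = Q" by (simp add: exp_minus)
  ultimately have "(Ad - Ac) / (d - c) * exp (- m1) \<le> Q" by simp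
  then show ?thesis unfolding m1_def .
qed

definition Ifun :: "real \<Rightarrow> real \<Rightarrow> real \<Rightarrow> real \<Rightarrow> real" where
  "Ifun g v a s = (if s \<le> a then v * a / g * (s / a) powr g else v * a / g + v * (s - a))"
definition Kfun :: "real \<Rightarrow> real \<Rightarrow> real \<Rightarrow> real \<Rightarrow> real" where
  "Kfun g v a s = (if s \<le> a then s * ln v + (g - 1) * (s * ln (s / a) - s) else s * ln v - (g - 1) * a)"

lemma R1:
  assumes g: "0 < g" and v: "0 < v" and s: "0 < s" "s \<le> a"
  shows "Ifun g v a s = exp (g - 1) / g * s * exp (Kfun g v a s / s)"
proof -
  have a: "a > 0" using s by simp
  have "Kfun g v a s / s = ln v + (g - 1) * ln (s / a) - (g - 1)"
    using s unfolding Kfun_def by (simp add: field_simps)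
  then have "exp (Kfun g v a s / s) = v * (s / a) powr (g - 1) / exp (g - 1)"
    using v s a by (simp add: exp_add exp_diff powr_def mult.commute)
  moreover have "(s / a) powr g = (s / a) * (s / a) powr (g - 1)"
    using powr_add[of "s / a" 1 "g - 1"] s a by simp
  ultimately show ?thesis using s a g unfolding Ifun_def by (simp add: field_simps)
qed

lemma R2:
  assumes g: "0 < g" and v: "0 < v" and s: "0 < s" "a < s" and a: "0 \<le> a"
  shows "Ifun g v a s \<le> exp (g - 1) / g * s * exp (Kfun g v a s / s)"
proof -
  have k: "Kfun g v a s / s = ln v - (g - 1) * a / s"
    using s unfolding Kfun_def by (simp add: field_simps)
  have e: "exp (Kfun g v a s / s) = v * exp (- ((g - 1) * a / s))"
    unfolding k using v by (simp add: exp_diff exp_minus field_simps)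
  have "exp (g - 1) * exp (- ((g - 1) * a / s)) = exp ((g - 1) - (g - 1) * a / s)"
    using exp_add[of "g - 1" "- ((g - 1) * a / s)"] by simp
  also have "\<dots> \<ge> 1 + ((g - 1) - (g - 1) * a / s)" by (rule exp_ge_add_one_self)
  finally have h: "exp (g - 1) * exp (- ((g - 1) * a / s)) \<ge> 1 + ((g - 1) - (g - 1) * a / s)" .
  have "Ifun g v a s = v * s / g * (1 + ((g - 1) - (g - 1) * a / s))"
    using s g unfolding Ifun_def by (simp add: field_simps)
  also have "\<dots> \<le> v * s / g * (exp (g - 1) * exp (- ((g - 1) * a / s)))"
    using h v s g by (intro mult_left_mono) auto
  also have "\<dots> = exp (g - 1) / g * s * exp (Kfun g v a s / s)" unfolding e by (simp add: field_simps)
  finally show ?thesis .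
qed

lemma Ainf_real:
  assumes g: "0 < g" and v: "0 < v" and a: "0 \<le> a" and cd: "0 \<le> c" "c < d"
  shows "(Ifun g v a d - Ifun g v a c) / (d - c) * exp (- ((Kfun g v a d - Kfun g v a c) / (d - c))) \<le> exp (g - 1) / g"
proof -
  let ?Q = "exp (g - 1) / g"
  have Qpos: "?Q > 0" using g by simp
  have Rd: "Ifun g v a d \<le> ?Q * d * exp (Kfun g v a d / d)"
    using R1[OF g v, of d a] R2[OF g v, of d a] cd a by (cases "d \<le> a") auto
  consider "c = 0" | "0 < c" "c \<le> a" | "a < c" using cd by linarith
  then show ?thesis
  proof cases
    case 1
    have "Ifun g v a 0 = 0" "Kfun g v a 0 = 0" using a unfolding Ifun_def Kfun_def by auto
    then have "(Ifun g v a d - Ifun g v a c) / (d - c) * exp (- ((Kfun g v a d - Kfun g v a c) / (d - c)))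
        = Ifun g v a d / d * exp (- (Kfun g v a d / d))" using 1 by simp
    also have "\<dots> \<le> ?Q * d * exp (Kfun g v a d / d) / d * exp (- (Kfun g v a d / d))"
      using Rd cd by (intro mult_right_mono divide_right_mono) auto
    also have "\<dots> = ?Q" using cd 1 by (simp add: exp_minus field_simps)
    finally show ?thesis .
  next
    case 2
    show ?thesis by (rule conv_step[OF _ cd(2) Qpos R1[OF g v 2] Rd]) (use 2 in auto)
  next
    case 3
    then have "Ifun g v a d - Ifun g v a c = v * (d - c)" "Kfun g v a d - Kfun g v a c = (d - c) * ln v"
      using cd unfolding Ifun_def Kfun_def by (auto simp: algebra_simps)
    then have "(Ifun g v a d - Ifun g v a c) / (d - c) * exp (- ((Kfun g v a d - Kfun g v a c) / (d - c))) = 1"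
      using cd v by (simp add: exp_minus)
    also have "1 \<le> ?Q" using exp_ge_add_one_self[of "g - 1"] g by simp
    finally show ?thesis .
  qed
qed

lemma lim_powr_ln:
  fixes e :: real assumes e: "e > 0"
  shows "((\<lambda>s. s powr e * ln s) \<longlongrightarrow> 0) (at_right 0)"
proof (rule Lim_null_comparison)
  show "\<forall>\<^sub>F s in at_right 0. norm (s powr e * ln s) \<le> 2 / e * s powr (e / 2)"
  proof -
    have "norm (s powr e * ln s) \<le> 2 / e * s powr (e / 2)" if s: "0 < s" "s < 1" for s :: real
    proof -
      have "ln (s powr (- e / 2)) \<le> s powr (- e / 2) - 1" using s by (intro ln_le_minus_one) auto
      then have "- ln s \<le> 2 / e * s powr (- e / 2)" using e by (simp add: field_simps)
      moreover have "ln s < 0" using s by simp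
      ultimately have "s powr e * (- ln s) \<le> s powr e * (2 / e * s powr (- e / 2))"
        using s by (intro mult_left_mono) auto
      moreover have "norm (s powr e * ln s) = s powr e * (- ln s)" using \<open>ln s < 0\<close> by (simp add: abs_mult)
      ultimately have "norm (s powr e * ln s) \<le> s powr e * (2 / e * s powr (- e / 2))" by simp
      also have "\<dots> = 2 / e * (s powr e * s powr (- e / 2))" by simp
      also have "s powr e * s powr (- e / 2) = s powr (e / 2)" by (simp add: powr_add[symmetric])
      finally show ?thesis .
    qed
    moreover have "\<forall>\<^sub>F s in at_right 0. 0 < s \<and> s < (1::real)"
      by (simp add: eventually_at_right_less eventually_conj eventually_at_right_field) (auto intro: exI[of _ 1])
    ultimately show ?thesis by (auto elim: eventually_mono)
  qed
  have "((\<lambda>s. s powr (e / 2)) \<longlongrightarrow> 0 powr (e / 2)) (at_right (0::real))"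
    by (intro tendsto_powr' tendsto_ident_at) (use e eventually_at_right_less[of "0::real"] in \<open>auto elim: eventually_mono\<close>)
  then show "((\<lambda>s. 2 / e * s powr (e / 2)) \<longlongrightarrow> 0) (at_right 0)"
    using tendsto_mult_right_zero by fastforce
qed

lemma cont_powr_ln:
  fixes e :: real assumes "e > 0"
  shows "continuous_on {0..} (\<lambda>t. t powr e * ln t)"
proof -
  have "continuous (at t within {0..}) (\<lambda>t. t powr e * ln t)" if "t \<ge> 0" for t
  proof (cases "t = 0")
    case True
    have "((\<lambda>s. s powr e * ln s) \<longlongrightarrow> 0) (at_right 0)" using assms by (rule lim_powr_ln)
    then show ?thesis using True by (simp add: continuous_within at_within_Ici_at_right)
  next
    case False
    then have "t > 0" using that by simp
    then have "isCont (\<lambda>t. t powr e * ln t) t" by (intro continuous_intros) auto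
    then show ?thesis using continuous_at_imp_continuous_within by blast
  qed
  then show ?thesis by (simp add: continuous_on_eq_continuous_within)
qed

context
  fixes g v a :: real and w :: "real \<Rightarrow> real"
  assumes g: "0 < g" "g < 1" and v: "0 < v" and a: "0 < a"
    and hw: "\<And>t. w t = (if t \<le> a then v * (t / a) powr (g - 1) else v)"
begin

lemma I_small:
  assumes "0 \<le> s" "s \<le> a"
  shows "(w has_integral (v * a / g * (s/a) powr g)) {0..s}"
proof -
  have "(w has_integral (v * a / g * (s/a) powr g - v * a / g * (0/a) powr g)) {0..s}"
  proof (rule fundamental_theorem_of_calculus_interior)
    show "continuous_on {0..s} (\<lambda>t. v * a / g * (t / a) powr g)"
      using g a by (intro continuous_intros continuous_on_powr') auto
    fix t assume t: "t \<in> {0<..<s}"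
    have "((\<lambda>t. v * a / g * (t / a) powr g) has_real_derivative v * a / g * (g * (t / a) powr (g-1) * (1/a))) (at t)"
      using t a by (auto intro!: derivative_eq_intros)
    moreover have "v * a / g * (g * (t / a) powr (g-1) * (1/a)) = w t"
      using t a g assms hw[of t] by auto
    ultimately show "((\<lambda>t. v * a / g * (t / a) powr g) has_vector_derivative w t) (at t)"
      by (simp add: has_real_derivative_iff_has_vector_derivative)
  qed (use assms in auto)
  then show ?thesis using g by simp
qed

lemma lnw_small: assumes "0 < t" "t \<le> a" shows "ln (w t) = ln v + (g - 1) * ln (t / a)"
  using assms v a hw[of t] by (simp add: ln_mult)

lemma cont_tlnt: "continuous_on {0..s} (\<lambda>t. t * ln (t / a))"
proof -
  have "continuous_on {0..s} (\<lambda>t. a * ((t / a) powr 1 * ln (t / a)))"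
    by (intro continuous_intros continuous_on_compose2[OF cont_powr_ln[of 1]]) (use a in auto)
  moreover have "a * ((t / a) powr 1 * ln (t / a)) = t * ln (t / a)" if "t \<in> {0..s}" for t
    using that a by simp
  ultimately show ?thesis using continuous_on_cong by (smt (verit))
qed

lemma K_small:
  assumes "0 \<le> s" "s \<le> a"
  shows "((\<lambda>t. ln (w t)) has_integral (s * ln v + (g - 1) * (s * ln (s / a) - s))) {0..s}"
proof -
  have "((\<lambda>t. ln (w t)) has_integral ((s * ln v + (g - 1) * (s * ln (s / a) - s)) - (0 * ln v + (g - 1) * (0 * ln (0 / a) - 0)))) {0..s}"
  proof (rule fundamental_theorem_of_calculus_interior)
    show "continuous_on {0..s} (\<lambda>t. t * ln v + (g - 1) * (t * ln (t / a) - t))"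
      by (intro continuous_intros cont_tlnt)
    fix t assume t: "t \<in> {0<..<s}"
    have "((\<lambda>t. t * ln v + (g - 1) * (t * ln (t / a) - t)) has_real_derivative 
          1 * ln v + (g - 1) * (1 * ln (t / a) + t * (1 / a / (t / a)) - 1)) (at t)"
      using t a by (auto intro!: derivative_eq_intros)
    moreover have "1 * ln v + (g - 1) * (1 * ln (t / a) + t * (1 / a / (t / a)) - 1) = ln (w t)"
      using t a assms lnw_small[of t] by auto
    ultimately show "((\<lambda>t. t * ln v + (g - 1) * (t * ln (t / a) - t)) has_vector_derivative ln (w t)) (at t)"
      by (simp add: has_real_derivative_iff_has_vector_derivative)
  qed (use assms in auto)
  then show ?thesis by simp
qed

lemma N_small:
  assumes "0 \<le> s" "s \<le> a"
  shows "((\<lambda>t. w t * ln (w t)) has_integral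
     (v * ln v * (a / g) * (s / a) powr g + v * (g - 1) * a * ((s / a) powr g * ln (s / a) / g - (s / a) powr g / g^2))) {0..s}"
proof -
  define N where "N = (\<lambda>t. v * ln v * (a / g) * (t / a) powr g + v * (g - 1) * a * ((t / a) powr g * ln (t / a) / g - (t / a) powr g / g^2))"
  have "((\<lambda>t. w t * ln (w t)) has_integral (N s - N 0)) {0..s}"
  proof (rule fundamental_theorem_of_calculus_interior)
    have c0: "continuous_on {0..s} (\<lambda>t. t / a)" by (intro continuous_intros) (use a in auto)
    have c1: "continuous_on {0..s} (\<lambda>t. (t / a) powr g)"
      by (rule continuous_on_powr'[OF c0 continuous_on_const]) (use a g in auto)
    have c2: "continuous_on {0..s} (\<lambda>t. (t / a) powr g * ln (t / a))"
      by (rule continuous_on_compose2[OF cont_powr_ln[of g] c0]) (use a g in auto)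
    have c3: "continuous_on {0..s} (\<lambda>t. (t / a) powr g * ln (t / a) / g - (t / a) powr g / g^2)"
      by (rule continuous_on_diff[OF continuous_on_divide[OF c2 continuous_on_const] continuous_on_divide[OF c1 continuous_on_const]])
         (use g in auto)
    show "continuous_on {0..s} N" unfolding N_def
      by (rule continuous_on_add[OF continuous_on_mult[OF continuous_on_const c1] continuous_on_mult[OF continuous_on_const c3]])
    fix t assume t: "t \<in> {0<..<s}"
    define u where "u = t / a"
    have u: "u > 0" using t a u_def by auto
    have dP: "((\<lambda>t. (t / a) powr g) has_real_derivative g * (t / a) powr (g - 1) * (1 / a)) (at t)"
      using t a by (auto intro!: derivative_eq_intros)
    have dL: "((\<lambda>t. (t / a) powr g * ln (t / a)) has_real_derivative
        (g * (t / a) powr (g - 1) * (1 / a)) * ln (t / a) + (t / a) powr g * (1 / a / (t / a))) (at t)"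
      using t a by (auto intro!: derivative_eq_intros)
    have "(N has_real_derivative 
       v * ln v * (a / g) * (g * (t / a) powr (g - 1) * (1 / a)) + v * (g - 1) * a * (((g * (t / a) powr (g - 1) * (1 / a)) * ln (t / a) + (t / a) powr g * (1 / a / (t / a))) / g - (g * (t / a) powr (g - 1) * (1 / a)) / g^2)) (at t)"
      unfolding N_def by (rule DERIV_add[OF DERIV_cmult[OF dP] DERIV_cmult[OF DERIV_diff[OF DERIV_cdivide[OF dL] DERIV_cdivide[OF dP]]]])
    moreover have "v * ln v * (a / g) * (g * (t / a) powr (g - 1) * (1 / a)) + v * (g - 1) * a * (((g * (t / a) powr (g - 1) * (1 / a)) * ln (t / a) + (t / a) powr g * (1 / a / (t / a))) / g - (g * (t / a) powr (g - 1) * (1 / a)) / g^2) = w t * ln (w t)"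
    proof -
      have pg: "u powr g = u * u powr (g - 1)" using powr_add[of u 1 "g - 1"] u by simp
      have wt: "w t = v * u powr (g - 1)" using hw[of t] t assms u_def by auto
      have alg: "\<And>P L. v * ln v * (a / g) * (g * P * (1 / a)) + v * (g - 1) * a * (((g * P * (1 / a)) * L + (u * P) * (1 / a / u)) / g - (g * P * (1 / a)) / g^2) = v * P * (ln v + (g - 1) * L)"
      proof -
        fix P L
        have e1: "v * ln v * (a / g) * (g * P * (1 / a)) = v * ln v * P" using a g by simp
        have e2: "(u * P) * (1 / a / u) = P / a" using u by simp
        have e3: "((g * P * (1 / a)) * L + P / a) / g - (g * P * (1 / a)) / g^2 = P * L / a"
          using a g by (simp add: field_simps power2_eq_square)
        show "v * ln v * (a / g) * (g * P * (1 / a)) + v * (g - 1) * a * (((g * P * (1 / a)) * L + (u * P) * (1 / a / u)) / g - (g * P * (1 / a)) / g^2) = v * P * (ln v + (g - 1) * L)"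
          unfolding e1 e2 e3 using a by (simp add: algebra_simps)
      qed
      have ln: "ln (w t) = ln v + (g - 1) * ln u" using lnw_small[of t] t assms u_def by auto
      have "w t * ln (w t) = v * u powr (g - 1) * (ln v + (g - 1) * ln u)" unfolding ln by (simp only: wt)
      then show ?thesis unfolding u_def[symmetric] pg using alg[of "u powr (g - 1)" "ln u"] by simp
    qed
    ultimately show "(N has_vector_derivative w t * ln (w t)) (at t)"
      by (simp add: has_real_derivative_iff_has_vector_derivative)
  qed (use assms in auto)
  then show ?thesis using g unfolding N_def by simp
qed
end

context
  fixes g v a :: real and w :: "real \<Rightarrow> real"
  assumes g: "0 < g" "g < 1" and v: "0 < v" and a: "0 \<le> a"
    and hw: "\<And>t. w t = (if t \<le> a then v * (t / a) powr (g - 1) else v)"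
begin

lemma w_big: "t > a \<Longrightarrow> w t = v" using hw[of t] by simp

lemma I_all: assumes "0 \<le> s" shows "(w has_integral Ifun g v a s) {0..s}"
proof (cases "a = 0")
  case True
  show ?thesis using const_integral[of 0 s w v] assms w_big True unfolding Ifun_def
    by (cases "s = 0") (auto simp: algebra_simps)
next
  case False
  then have ap: "a > 0" using a by simp
  show ?thesis
  proof (cases "s \<le> a")
    case True
    then show ?thesis using I_small[OF g v ap hw assms True] unfolding Ifun_def by simp
  next
    case False
    have "(w has_integral (v * a / g * (a / a) powr g + v * (s - a))) {0..s}"
      by (rule has_integral_combine[OF _ _ I_small[OF g v ap hw] const_integral])
         (use False a ap w_big in auto)
    then show ?thesis using False ap unfolding Ifun_def by simp
  qed
qed

lemma K_all: assumes "0 \<le> s" shows "((\<lambda>t. ln (w t)) has_integral Kfun g v a s) {0..s}"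
proof (cases "a = 0")
  case True
  show ?thesis using const_integral[of 0 s "\<lambda>t. ln (w t)" "ln v"] assms w_big True unfolding Kfun_def
    by (cases "s = 0") (auto simp: algebra_simps)
next
  case False
  then have ap: "a > 0" using a by simp
  show ?thesis
  proof (cases "s \<le> a")
    case True
    then show ?thesis using K_small[OF g v ap hw assms True] unfolding Kfun_def by simp
  next
    case False
    have "((\<lambda>t. ln (w t)) has_integral ((a * ln v + (g - 1) * (a * ln (a / a) - a)) + ln v * (s - a))) {0..s}"
      by (rule has_integral_combine[OF _ _ K_small[OF g v ap hw] const_integral])
         (use False a ap w_big in auto)
    then show ?thesis using False ap unfolding Kfun_def by (simp add: algebra_simps)
  qed
qed

lemma N_all: assumes "a \<le> 1"
  shows "((\<lambda>t. w t * ln (w t)) has_integral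
     (v * ln v * (a / g) - v * (g - 1) * a / g^2 + v * ln v * (1 - a))) {0..1}"
proof (cases "a = 0")
  case True
  show ?thesis using const_integral[of 0 1 "\<lambda>t. w t * ln (w t)" "v * ln v"] w_big True
    by (auto simp: algebra_simps)
next
  case False
  then have ap: "a > 0" using a by simp
  have "((\<lambda>t. w t * ln (w t)) has_integral
     ((v * ln v * (a / g) * (a / a) powr g + v * (g - 1) * a * ((a / a) powr g * ln (a / a) / g - (a / a) powr g / g^2))
      + v * ln v * (1 - a))) {0..1}"
    by (rule has_integral_combine[OF _ _ N_small[OF g v ap hw] const_integral])
       (use assms a ap w_big in auto)
  moreover have "(v * ln v * (a / g) * (a / a) powr g + v * (g - 1) * a * ((a / a) powr g * ln (a / a) / g - (a / a) powr g / g^2))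
      + v * ln v * (1 - a) = v * ln v * (a / g) - v * (g - 1) * a / g^2 + v * ln v * (1 - a)"
    using ap by simp
  ultimately show ?thesis by simp
qed

lemma w_facts: assumes "0 \<le> t" shows "w t \<ge> 0" "w t = 0 \<or> ln (w t) \<ge> ln v"
proof -
  show "w t \<ge> 0" using hw[of t] v by auto
  show "w t = 0 \<or> ln (w t) \<ge> ln v"
  proof (cases "t = 0")
    case True
    then show ?thesis using hw[of t] a by simp
  next
    case False
    then have tp: "t > 0" using assms by simp
    show ?thesis
    proof (cases "t \<le> a")
      case True
      then have ap: "a > 0" using tp by simp
      have "ln (w t) = ln v + (g - 1) * ln (t / a)" using lnw_small[OF g v ap hw tp True] .
      moreover have "ln (t / a) \<le> 0" using tp True ap by simp
      moreover have "(g - 1) * ln (t / a) \<ge> 0" using calculation(2) g by (simp add: mult_nonpos_nonpos)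
      ultimately show ?thesis by simp
    next
      case False
      then show ?thesis using w_big by simp
    qed
  qed
qed

lemma lnw_bound: assumes "0 \<le> t" shows "\<bar>ln (w t)\<bar> \<le> \<bar>ln v\<bar> + ln (w t) - ln v"
  using w_facts[OF assms] by auto

lemma wdef: "w = (\<lambda>t. if t \<le> a then v * (t / a) powr (g - 1) else v)" using hw by auto

lemma meas: "w \<in> borel_measurable borel" "(\<lambda>t. ln (w t)) \<in> borel_measurable borel"
   "(\<lambda>t. w t * ln (w t)) \<in> borel_measurable borel"
  unfolding wdef by measurable

end

theorem mainTheorem8:
  fixes Q \<gamma> x y v a :: real and w :: "real \<Rightarrow> real"
  assumes hQ: "Q > 1"
    and h\<gamma>: "\<gamma> < 1" "0 < \<gamma>" "\<gamma> - ln \<gamma> = 1 + ln Q"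
    and hx: "x > 0" "1 \<le> x * exp (- y)" "x * exp (- y) \<le> Q"
    and hv: "0 < v" "v \<le> x" "y = \<gamma> * x / v + ln v - \<gamma>"
    and ha: "0 \<le> a" "a \<le> 1"
    and hw: "\<And>t. w t = (if t \<le> a then v * (t / a) powr (\<gamma> - 1) else v)"
    and havg: "avg 0 1 w = x" "avg 0 1 (\<lambda>t. ln (w t)) = y"
  shows "Ainf01 w \<le> ereal Q \<and> x * ln v + (x - v) / \<gamma> = avg 0 1 (\<lambda>t. w t * ln (w t))"
proof -
  note g = h\<gamma>(2) h\<gamma>(1)
  note v = hv(1)
  note a = ha(1)
  have Qeq: "Q = exp (\<gamma> - 1) / \<gamma>"
  proof -
    have "ln Q = (\<gamma> - 1) - ln \<gamma>" using h\<gamma>(3) by simp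
    then have "exp (ln Q) = exp (\<gamma> - 1) / exp (ln \<gamma>)" by (simp add: exp_diff)
    then show ?thesis using hQ g by simp
  qed
  have Wi: "w integrable_on {0..1}" using I_all[OF g v a hw, of 1] by (auto intro: has_integral_integrable)
  have Li: "(\<lambda>t. ln (w t)) integrable_on {0..1}" using K_all[OF g v a hw, of 1] by (auto intro: has_integral_integrable)
  have Ni: "(\<lambda>t. w t * ln (w t)) integrable_on {0..1}" using N_all[OF g v a hw ha(2)] by (auto intro: has_integral_integrable)
  have Wa: "w absolutely_integrable_on {0..1}"
    by (rule nonnegative_absolutely_integrable_1[OF Wi]) (use w_facts[OF g v a hw] in auto)
  have La: "(\<lambda>t. ln (w t)) absolutely_integrable_on {0..1}"
  proof (rule absolutely_integrable_integrable_bound[where g = "\<lambda>t. \<bar>ln v\<bar> + ln (w t) - ln v"])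
    show "(\<lambda>t. \<bar>ln v\<bar> + ln (w t) - ln v) integrable_on {0..1}"
      by (intro integrable_diff integrable_add integrable_const_ivl Li)
  qed (use Li lnw_bound[OF g v a hw] in auto)
  have Na: "(\<lambda>t. w t * ln (w t)) absolutely_integrable_on {0..1}"
  proof (rule absolutely_integrable_integrable_bound[where g = "\<lambda>t. (\<bar>ln v\<bar> - ln v) * w t + w t * ln (w t)"])
    show "(\<lambda>t. (\<bar>ln v\<bar> - ln v) * w t + w t * ln (w t)) integrable_on {0..1}"
      by (intro integrable_add Ni) (use integrable_on_cmult_left[OF Wi, of "\<bar>ln v\<bar> - ln v"] in simp)
    fix t :: real assume t: "t \<in> {0..1}"
    have w0: "w t \<ge> 0" using w_facts[OF g v a hw, of t] t by auto
    have "norm (w t * ln (w t)) = w t * \<bar>ln (w t)\<bar>" using w0 by (simp add: abs_mult)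
    also have "\<dots> \<le> w t * (\<bar>ln v\<bar> + ln (w t) - ln v)"
      using lnw_bound[OF g v a hw, of t] t w0 by (intro mult_left_mono) auto
    finally show "norm (w t * ln (w t)) \<le> (\<bar>ln v\<bar> - ln v) * w t + w t * ln (w t)"
      by (simp add: algebra_simps)
  qed (use Ni in auto)
  note ms = meas[OF g v a hw]
  have avgW: "avg c d w = (Ifun \<gamma> v a d - Ifun \<gamma> v a c) / (d - c)"
    if "0 \<le> c" "c \<le> d" "d \<le> 1" for c d
  proof -
    have sub: "w absolutely_integrable_on {c..d}" using absolutely_integrable_on_subinterval[OF Wa] that by auto
    show ?thesis unfolding avg_def LBINT_eq_integral[OF sub ms(1)]
      using integral_sub[OF that(1,2) I_all[OF g v a hw that(1)] I_all[OF g v a hw, of d]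
         conjunct1[OF sub[unfolded absolutely_integrable_on_def]]] that by simp
  qed
  have avgK: "avg c d (\<lambda>t. ln (w t)) = (Kfun \<gamma> v a d - Kfun \<gamma> v a c) / (d - c)"
    if "0 \<le> c" "c \<le> d" "d \<le> 1" for c d
  proof -
    have sub: "(\<lambda>t. ln (w t)) absolutely_integrable_on {c..d}" using absolutely_integrable_on_subinterval[OF La] that by auto
    show ?thesis unfolding avg_def LBINT_eq_integral[OF sub ms(2)]
      using integral_sub[OF that(1,2) K_all[OF g v a hw that(1)] K_all[OF g v a hw, of d]
         conjunct1[OF sub[unfolded absolutely_integrable_on_def]]] that by simp
  qed
  have A: "Ainf01 w \<le> ereal Q"
    unfolding Ainf01_def
  proof (rule SUP_least)
    fix J :: "real \<times> real" assume "J \<in> {(c, d). 0 \<le> c \<and> c < d \<and> d \<le> 1}"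
    then obtain c d where J: "J = (c, d)" "0 \<le> c" "c < d" "d \<le> 1" by auto
    have "avg c d w * exp (- avg c d (\<lambda>t. ln (w t))) \<le> Q"
      unfolding avgW[OF J(2) order.strict_implies_order[OF J(3)] J(4)] avgK[OF J(2) order.strict_implies_order[OF J(3)] J(4)] Qeq
      using Ainf_real[OF g(1) v a J(2,3)] J by simp
    then show "ereal (avg (fst J) (snd J) w * exp (- avg (fst J) (snd J) (\<lambda>t. ln (w t)))) \<le> ereal Q"
      using J by simp
  qed
  have xval: "x = v * a / \<gamma> + v * (1 - a)"
    using havg(1) avgW[of 0 1] ha unfolding Ifun_def by (cases "a = 1") (auto simp: Ifun_def)
  have Nval: "avg 0 1 (\<lambda>t. w t * ln (w t)) = v * ln v * (a / \<gamma>) - v * (\<gamma> - 1) * a / \<gamma>^2 + v * ln v * (1 - a)"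
    unfolding avg_def LBINT_eq_integral[OF Na ms(3)]
    using integral_unique[OF N_all[OF g v a hw ha(2)]] by simp
  have "x * ln v + (x - v) / \<gamma> = v * ln v * (a / \<gamma>) - v * (\<gamma> - 1) * a / \<gamma>^2 + v * ln v * (1 - a)"
    unfolding xval using g by (simp add: field_simps power2_eq_square)
  then show ?thesis using A Nval by simp
qed

end
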